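(* Let $n\le -1$ be an odd integer with $3\nmid n$. Then the reductions modulo $3$ of $g_n$ and its derivative $g_n'=dg_n/dv$ have no common factor in $\mathbb{F}_3[v]$; that is, $g_n$ is squarefree modulo $3$.
   Context: Let $a=v^2+v-1$ and $B=(v^2-1)(v^2-v-1)$. For odd $n\le -1$ with $k=(1-n)/2$, define $g_n$ by $g_n=\big[(a+b)^k-(a-b)^k-(a+b)^{k+2}+(a-b)^{k+2}\big]/b$, where $b$ is a formal square root of $B$; the expression is a polynomial in $a$ and $b^2=B$, hence $g_n\in\mathbb{Z}[v]$. *)

theory Defs
  imports "HOL-Computational_Algebra.Polynomial" "Berlekamp_Zassenhaus.Finite_Field"
begin

text \<open>A type with exactly three elements; GF(3) is then the type three mod_ring.\<close>
typedef three = "{0::nat..<3}" by (rule exI[of _ 0]) simp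

lemma card_three: "CARD(three) = 3"
  using type_definition.card[OF type_definition_three] by simp

instance three :: finite
proof
  show "finite (UNIV :: three set)"
    using card_three card.infinite by fastforce
qed

instance three :: prime_card
  by standard (simp add: card_three)

type_synonym F3 = "three mod_ring"

definition g_a :: "int poly" where
  "g_a = [:-1, 1, 1:]"

definition g_B :: "int poly" where
  "g_B = [:-1, 0, 1:] * [:-1, -1, 1:]"

text \<open>D m = ((a+b)^m - (a-b)^m) / b, written out via the binomial theorem with b^2 = B:
  only odd powers b^i survive, each twice, and b^i / b = B^(i div 2).\<close>
definition g_D :: "nat \<Rightarrow> int poly" where
  "g_D m = (\<Sum>i\<in>{0..m}. if odd i
              then smult (2 * of_nat (m choose i)) (g_a ^ (m - i) * g_B ^ (i div 2))
              else 0)"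

text \<open>g_n for odd n \<le> -1, with k = (1 - n)/2:
  g_n = [(a+b)^k - (a-b)^k - (a+b)^(k+2) + (a-b)^(k+2)] / b.\<close>
definition g_poly :: "int \<Rightarrow> int poly" where
  "g_poly n = (let k = nat ((1 - n) div 2) in g_D k - g_D (k + 2))"

definition reduce3 :: "int poly \<Rightarrow> F3 poly" where
  "reduce3 p = map_poly of_int p"

end

theory Submission
  imports Defs
begin


lemma three0: "(3::F3) = 0"
  using of_nat_card_eq_0[where 'a=three] by (simp add: card_three)
lemma three0p: "(3::F3 poly) = 0"
  by (metis of_nat_numeral of_nat_poly pCons_0_0 three0 of_nat_numeral)
lemma mod3: "x = y + 3 * w \<Longrightarrow> x = (y::F3 poly)"
  using three0p by simp

definition vv :: "F3 poly" where "vv = [:0,1:]"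
definition AA :: "F3 poly" where "AA = vv*vv + vv - 1"
definition dA :: "F3 poly" where "dA = 2*vv + 1"
definition BB :: "F3 poly" where "BB = (vv*vv - 1)*(vv*vv - vv - 1)"
definition dB :: "F3 poly" where "dB = 2*vv*(vv*vv - vv - 1) + (vv*vv - 1)*(2*vv - 1)"
definition cRs :: "F3 poly" where "cRs = vv*vv + AA*AA + vv*AA*dA"
definition cRt :: "F3 poly" where "cRt = AA - vv*dA"

fun dd :: "nat \<Rightarrow> F3 poly" where
  "dd 0 = 0"
| "dd (Suc 0) = -1"
| "dd (Suc (Suc m)) = - AA * dd (Suc m) - vv*vv*dd m"

lemma pd_vv[simp]: "pderiv vv = 1"
  by (simp add: vv_def pderiv_pCons)
lemma pd_AA: "pderiv AA = dA"
  by (simp add: AA_def dA_def pderiv_add pderiv_diff pderiv_mult algebra_simps)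
lemma pd_BB: "pderiv BB = dB"
  by (simp add: BB_def dB_def pderiv_add pderiv_diff pderiv_mult algebra_simps)

lemma pd_dd_SS: "pderiv (dd (Suc (Suc m))) =
   - (dA * dd (Suc m) + AA * pderiv (dd (Suc m))) - (2*vv*dd m + vv*vv*pderiv (dd m))"
  by (simp add: pderiv_add pderiv_diff pderiv_mult pderiv_minus pd_AA algebra_simps)

lemma step_id:
  fixes s t M :: "F3 poly"
  shows "- vv*BB*dA*t - AA*(vv*dB*t - (M+1)*(cRs*t + cRt*(- AA*t - vv*vv*s)))
         - 2*vv*vv*BB*s - vv*vv*(vv*dB*s - M*(cRs*s + cRt*t))
     = vv*dB*(- AA*t - vv*vv*s) - (M+2)*(cRs*(- AA*t - vv*vv*s) + cRt*(- AA*(- AA*t - vv*vv*s) - vv*vv*t))"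
  apply (rule mod3[where w="(- vv*t - vv*vv*s + 3*vv*vv*vv*t + vv*vv*vv*s + 2*vv*vv*vv*vv*t + 2*vv*vv*vv*vv*s - 3*vv*vv*vv*vv*vv*t - 3*vv*vv*vv*vv*vv*s - 2*vv*vv*vv*vv*vv*vv*t - 3*vv*vv*vv*vv*vv*vv*s)"])
  unfolding AA_def BB_def dB_def dA_def cRs_def cRt_def by (simp add: algebra_simps)

lemma base_id: "0 = - vv*dB + cRs - cRt*AA"
  apply (rule mod3[where w="(vv - vv*vv - 3*vv*vv*vv)"])
  unfolding AA_def BB_def dB_def dA_def cRs_def cRt_def by (simp add: algebra_simps)

lemma DL2: "vv*BB*pderiv (dd m) = vv*dB*dd m - of_nat m*(cRs*dd m + cRt*dd (Suc m)) \<and>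
   vv*BB*pderiv (dd (Suc m)) = vv*dB*dd (Suc m) - of_nat (Suc m)*(cRs*dd (Suc m) + cRt*dd (Suc (Suc m)))"
proof (induction m)
  case 0
  show ?case using base_id by (simp add: algebra_simps pderiv_minus)
next
  case (Suc m)
  have h1: "vv*BB*pderiv (dd m) = vv*dB*dd m - of_nat m*(cRs*dd m + cRt*dd (Suc m))"
    and h2: "vv*BB*pderiv (dd (Suc m)) = vv*dB*dd (Suc m) - (of_nat m + 1)*(cRs*dd (Suc m) + cRt*(- AA * dd (Suc m) - vv*vv*dd m))"
    using Suc by (simp_all add: algebra_simps)
  have "vv*BB*pderiv (dd (Suc (Suc m))) = - vv*BB*dA*dd (Suc m) - AA*(vv*BB*pderiv (dd (Suc m)))
         - 2*vv*vv*BB*dd m - vv*vv*(vv*BB*pderiv (dd m))"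
    unfolding pd_dd_SS by (simp add: algebra_simps)
  also have "\<dots> = - vv*BB*dA*dd (Suc m) - AA*(vv*dB*dd (Suc m) - (of_nat m+1)*(cRs*dd (Suc m) + cRt*(- AA*dd (Suc m) - vv*vv*dd m)))
         - 2*vv*vv*BB*dd m - vv*vv*(vv*dB*dd m - of_nat m*(cRs*dd m + cRt*dd (Suc m)))"
    by (simp only: h1 h2)
  also have "\<dots> = vv*dB*(- AA*dd (Suc m) - vv*vv*dd m) - (of_nat m+2)*(cRs*(- AA*dd (Suc m) - vv*vv*dd m) + cRt*(- AA*(- AA*dd (Suc m) - vv*vv*dd m) - vv*vv*dd (Suc m)))"
    by (rule step_id)
  also have "\<dots> = vv*dB*dd (Suc (Suc m)) - of_nat (Suc (Suc m))*(cRs*dd (Suc (Suc m)) + cRt*dd (Suc (Suc (Suc m))))"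
    by (simp add: algebra_simps)
  finally show ?case using Suc by simp
qed
lemma ds0_id: fixes s t M :: "F3 poly"
  assumes hM: "M = 0"
  shows "vv*((vv+1)^3*(vv-1))*s = (- vv + vv*vv + vv*vv*vv*vv*vv + vv*vv*vv*vv*vv*vv)*(s - (- AA*t - vv*vv*s)) - AA*(- M*(cRs*s + cRt*t) + (M + 2)*(cRs*(- AA*t - vv*vv*s) + cRt*(- AA*(- AA*t - vv*vv*s) - vv*vv*t)))"
  unfolding hM apply (rule mod3[where w="(vv*t - 2*vv*vv*t - vv*vv*s - 6*vv*vv*vv*t - vv*vv*vv*s + 7*vv*vv*vv*vv*t + vv*vv*vv*vv*s + 13*vv*vv*vv*vv*vv*t + 6*vv*vv*vv*vv*vv*s - 4*vv*vv*vv*vv*vv*vv*t - vv*vv*vv*vv*vv*vv*s - 10*vv*vv*vv*vv*vv*vv*vv*t - 7*vv*vv*vv*vv*vv*vv*vv*s - 3*vv*vv*vv*vv*vv*vv*vv*vv*t - 3*vv*vv*vv*vv*vv*vv*vv*vv*s)"])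
  unfolding AA_def BB_def dB_def dA_def cRs_def cRt_def by (simp add: algebra_simps power3_eq_cube)

lemma dt0_id: fixes s t M :: "F3 poly"
  assumes hM: "M = 0"
  shows "vv*((vv+1)^3*(vv-1))*t = (- vv*vv*vv + vv*vv*vv*vv - vv*vv*vv*vv*vv*vv)*(s - (- AA*t - vv*vv*s)) + (1 + vv*vv)*(- M*(cRs*s + cRt*t) + (M + 2)*(cRs*(- AA*t - vv*vv*s) + cRt*(- AA*(- AA*t - vv*vv*s) - vv*vv*t)))"
  unfolding hM apply (rule mod3[where w="(vv*t - 2*vv*vv*t - 5*vv*vv*vv*t - vv*vv*vv*s - vv*vv*vv*vv*s + vv*vv*vv*vv*vv*t + 3*vv*vv*vv*vv*vv*s + 2*vv*vv*vv*vv*vv*vv*t + 2*vv*vv*vv*vv*vv*vv*s + 7*vv*vv*vv*vv*vv*vv*vv*t + 4*vv*vv*vv*vv*vv*vv*vv*s + 3*vv*vv*vv*vv*vv*vv*vv*vv*t + 3*vv*vv*vv*vv*vv*vv*vv*vv*s)"])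
  unfolding AA_def BB_def dB_def dA_def cRs_def cRt_def by (simp add: algebra_simps power3_eq_cube)

lemma ds1_id: fixes s t M :: "F3 poly"
  assumes hM: "M = 1"
  shows "vv*(-((vv+1)*(vv-1)^3))*s = (1 + vv*vv)*(s - (- AA*t - vv*vv*s)) - AA*(- M*(cRs*s + cRt*t) + (M + 2)*(cRs*(- AA*t - vv*vv*s) + cRt*(- AA*(- AA*t - vv*vv*s) - vv*vv*t)))"
  unfolding hM apply (rule mod3[where w="(2*vv*t - vv*s - 4*vv*vv*t - vv*vv*s - 9*vv*vv*vv*t + vv*vv*vv*s + 11*vv*vv*vv*vv*t + vv*vv*vv*vv*s + 19*vv*vv*vv*vv*vv*t + 6*vv*vv*vv*vv*vv*s - 6*vv*vv*vv*vv*vv*vv*t - 2*vv*vv*vv*vv*vv*vv*s - 14*vv*vv*vv*vv*vv*vv*vv*t - 10*vv*vv*vv*vv*vv*vv*vv*s - 4*vv*vv*vv*vv*vv*vv*vv*vv*t - 4*vv*vv*vv*vv*vv*vv*vv*vv*s)"])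
  unfolding AA_def BB_def dB_def dA_def cRs_def cRt_def by (simp add: algebra_simps power3_eq_cube)

lemma dt1_id: fixes s t M :: "F3 poly"
  assumes hM: "M = 1"
  shows "vv*(-((vv+1)*(vv-1)^3))*t = (1 - vv*vv - vv*vv*vv)*(s - (- AA*t - vv*vv*s)) + (1 + vv*vv)*(- M*(cRs*s + cRt*t) + (M + 2)*(cRs*(- AA*t - vv*vv*s) + cRt*(- AA*(- AA*t - vv*vv*s) - vv*vv*t)))"
  unfolding hM apply (rule mod3[where w="(2*vv*t - vv*s - 4*vv*vv*t - 7*vv*vv*vv*t - vv*vv*vv*s - vv*vv*vv*vv*t + vv*vv*vv*vv*vv*t + 6*vv*vv*vv*vv*vv*s + 4*vv*vv*vv*vv*vv*vv*t + 4*vv*vv*vv*vv*vv*vv*s + 10*vv*vv*vv*vv*vv*vv*vv*t + 6*vv*vv*vv*vv*vv*vv*vv*s + 4*vv*vv*vv*vv*vv*vv*vv*vv*t + 4*vv*vv*vv*vv*vv*vv*vv*vv*s)"])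
  unfolding AA_def BB_def dB_def dA_def cRs_def cRt_def by (simp add: algebra_simps power3_eq_cube)


lemma DL: "vv*BB*pderiv (dd m) = vv*dB*dd m - of_nat m*(cRs*dd m + cRt*dd (Suc m))"
  using DL2 by blast

lemma dd_SS: "dd (Suc (Suc m)) = - AA * dd (Suc m) - vv*vv*dd m" by simp

lemma cassini: "dd (Suc m) * dd (Suc m) + AA * dd m * dd (Suc m) + vv*vv*dd m*dd m = (vv*vv)^m"
proof (induction m)
  case 0 then show ?case by simp
next
  case (Suc m)
  have "dd (Suc (Suc m)) * dd (Suc (Suc m)) + AA * dd (Suc m) * dd (Suc (Suc m)) + vv*vv*dd (Suc m)*dd (Suc m)
     = vv*vv*(dd (Suc m) * dd (Suc m) + AA * dd m * dd (Suc m) + vv*vv*dd m*dd m)"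
    unfolding dd_SS by (simp add: algebra_simps)
  then show ?case using Suc by simp
qed

lemma F3_two: "(2::F3) = -1"
proof -
  have "(2::F3) + 1 = 0" using three0 by simp
  then show ?thesis by (simp add: eq_neg_iff_add_eq_0)
qed

lemma poly_vv[simp]: "poly vv x = x" by (simp add: vv_def)

lemma ev0: "poly (dd (Suc m)) 0 = -1 \<and> poly (pderiv (dd (Suc m))) 0 = of_nat m"
proof (induction m)
  case 0 then show ?case by (simp add: pderiv_minus)
next
  case (Suc m)
  have a0: "poly AA 0 = -1" and a1: "poly dA 0 = 1" by (simp_all add: AA_def dA_def vv_def)
  show ?case
    using Suc a0 a1 unfolding pd_dd_SS by (simp add: algebra_simps)
qed

lemma ev1: "poly (dd (3*j)) 1 = 0 \<and> poly (dd (3*j+1)) 1 = -1 \<and> poly (dd (3*j+2)) 1 = 1"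
proof (induction j)
  case 0 then show ?case by (simp add: AA_def vv_def numeral_2_eq_2)
next
  case (Suc j)
  have a: "poly AA 1 = 1" by (simp add: AA_def vv_def)
  have e3: "3 * Suc j = Suc (Suc (3*j+1))" and e4: "3 * Suc j + 1 = Suc (Suc (3*j+2))"
    and e5: "3 * Suc j + 2 = Suc (Suc (3*Suc j))" by simp_all
  have p3: "poly (dd (3 * Suc j)) 1 = 0"
    unfolding e3 dd_SS using Suc a by (simp add: vv_def numeral_2_eq_2 add.commute)
  have p4: "poly (dd (3 * Suc j + 1)) 1 = -1"
    unfolding e4 dd_SS using Suc a p3 by (simp add: vv_def numeral_2_eq_2 add.commute)
  have p5: "poly (dd (3 * Suc j + 2)) 1 = 1"
    unfolding e5 dd_SS using Suc a p3 p4 by (simp add: vv_def numeral_2_eq_2)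
  show ?case using p3 p4 p5 by simp
qed



lemma gD_real:
  fixes x :: real
  assumes pos: "0 < poly (map_poly of_int g_B) x"
  shows "poly (map_poly of_int (g_D m)) x * sqrt (poly (map_poly of_int g_B) x)
      = (poly (map_poly of_int g_a) x + sqrt (poly (map_poly of_int g_B) x))^m
      - (poly (map_poly of_int g_a) x - sqrt (poly (map_poly of_int g_B) x))^m"
proof -
  define \<alpha> where "\<alpha> = poly (map_poly (of_int::int\<Rightarrow>real) g_a) x"
  define \<beta> where "\<beta> = sqrt (poly (map_poly (of_int::int\<Rightarrow>real) g_B) x)"
  have bb: "poly (map_poly of_int g_B) x = \<beta>^2" using pos by (simp add: \<beta>_def)
  have L: "poly (map_poly of_int (g_D m)) x = (\<Sum>i\<in>{0..m}. if odd i then 2 * of_nat (m choose i) * \<alpha>^(m-i) * (\<beta>^2)^(i div 2) else 0)"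
    unfolding g_D_def of_int_poly_hom.hom_sum poly_sum
    by (rule sum.cong[OF refl]) (simp add: hom_distribs bb \<alpha>_def)
  have R1: "(\<alpha>+\<beta>)^m = (\<Sum>i\<le>m. of_nat (m choose i) * \<beta>^i * \<alpha>^(m-i))"
    using binomial_ring[of \<beta> \<alpha> m] by (simp add: add.commute)
  have R2: "(\<alpha>-\<beta>)^m = (\<Sum>i\<le>m. of_nat (m choose i) * (- \<beta>)^i * \<alpha>^(m-i))"
    using binomial_ring[of "- \<beta>" \<alpha> m] by simp
  have "poly (map_poly of_int (g_D m)) x * \<beta> = (\<alpha>+\<beta>)^m - (\<alpha>-\<beta>)^m"
    unfolding L R1 R2 sum_distrib_right sum_subtractf[symmetric] atLeast0AtMost
  proof (rule sum.cong[OF refl])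
    fix i assume "i \<in> {..m}"
    show "(if odd i then 2 * of_nat (m choose i) * \<alpha>^(m-i) * (\<beta>^2)^(i div 2) else 0) * \<beta>
        = of_nat (m choose i) * \<beta>^i * \<alpha>^(m-i) - of_nat (m choose i) * (- \<beta>)^i * \<alpha>^(m-i)"
    proof (cases "odd i")
      case True
      then obtain j where j: "i = 2*j+1" by (metis oddE)
      have "\<beta>^i = (\<beta>^2)^(i div 2) * \<beta>" unfolding j by (simp add: power_mult)
      moreover have "(- \<beta>)^i = - (\<beta>^i)" using True by simp
      ultimately show ?thesis using True by (simp add: algebra_simps)
    next
      case False then show ?thesis by simp
    qed
  qed
  then show ?thesis by (simp add: \<alpha>_def \<beta>_def)
qed

lemma gB_pos: "(2::real) \<le> x \<Longrightarrow> 0 < poly (map_poly of_int g_B) x"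
proof -
  assume x: "2 \<le> x"
  have "poly (map_poly of_int g_B) x = (x*x - 1) * (x*x - x - 1)"
    by (simp add: g_B_def hom_distribs algebra_simps)
  moreover have xx: "2*x \<le> x*x" using mult_right_mono[OF x, of x] x by simp
  moreover have "x*x - 1 > 0" using x xx by linarith
  moreover have "x*x - x - 1 > 0" using x xx by linarith
  ultimately show ?thesis by simp
qed

lemma poly_eq_int_from_real:
  fixes p :: "int poly"
  assumes "\<And>x::real. 2 \<le> x \<Longrightarrow> poly (map_poly of_int p) x = 0"
  shows "p = 0"
proof -
  have "map_poly (of_int::int\<Rightarrow>real) p = 0"
  proof (rule ccontr)
    assume ne: "map_poly (of_int::int\<Rightarrow>real) p \<noteq> 0"
    have "{2::real..} \<subseteq> {x. poly (map_poly of_int p) x = 0}" using assms by auto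
    moreover have "finite {x. poly (map_poly (of_int::int\<Rightarrow>real) p) x = 0}" using poly_roots_finite[OF ne] .
    ultimately show False using infinite_Ici[of "2::real"] finite_subset by blast
  qed
  then show "p = 0"
    by (metis (mono_tags) coeff_0 coeff_map_poly of_int_0 of_int_eq_0_iff poly_eqI)
qed

lemma gD_rec: "g_D (Suc (Suc m)) = smult 2 g_a * g_D (Suc m) - (g_a^2 - g_B) * g_D m"
proof -
  have "g_D (Suc (Suc m)) - (smult 2 g_a * g_D (Suc m) - (g_a^2 - g_B) * g_D m) = 0"
  proof (rule poly_eq_int_from_real)
    fix x :: real assume x: "2 \<le> x"
    define \<alpha> where "\<alpha> = poly (map_poly (of_int::int\<Rightarrow>real) g_a) x"
    define \<beta> where "\<beta> = sqrt (poly (map_poly (of_int::int\<Rightarrow>real) g_B) x)"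
    define F where "F = (\<lambda>k. poly (map_poly (of_int::int\<Rightarrow>real) (g_D k)) x)"
    have pos: "0 < poly (map_poly (of_int::int\<Rightarrow>real) g_B) x" using gB_pos[OF x] .
    have bpos: "\<beta> > 0" using pos by (simp add: \<beta>_def)
    have bb: "poly (map_poly of_int g_B) x = \<beta>^2" using pos by (simp add: \<beta>_def)
    have Fk: "\<And>k. F k * \<beta> = (\<alpha>+\<beta>)^k - (\<alpha>-\<beta>)^k"
      using gD_real[OF pos] by (simp add: F_def \<alpha>_def \<beta>_def)
    have ev: "poly (map_poly of_int (g_D (Suc (Suc m)) - (smult 2 g_a * g_D (Suc m) - (g_a^2 - g_B) * g_D m))) x
        = F (Suc (Suc m)) - (2*\<alpha>*F (Suc m) - (\<alpha>^2 - \<beta>^2) * F m)"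
      by (simp add: hom_distribs F_def \<alpha>_def bb)
    have "(F (Suc (Suc m)) - (2*\<alpha>*F (Suc m) - (\<alpha>^2 - \<beta>^2) * F m)) * \<beta>
       = F (Suc (Suc m)) * \<beta> - 2*\<alpha>*(F (Suc m) * \<beta>) + (\<alpha>^2 - \<beta>^2) * (F m * \<beta>)"
      by (simp add: algebra_simps)
    also have "\<dots> = 0" unfolding Fk by (simp add: algebra_simps power2_eq_square)
    finally have "(F (Suc (Suc m)) - (2*\<alpha>*F (Suc m) - (\<alpha>^2 - \<beta>^2) * F m)) * \<beta> = 0" .
    then show "poly (map_poly of_int (g_D (Suc (Suc m)) - (smult 2 g_a * g_D (Suc m) - (g_a^2 - g_B) * g_D m))) x = 0"
      using bpos ev by simp
  qed
  then show ?thesis by simp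
qed



lemma evm1: "poly (dd (3*j)) (-1) = 0 \<and> poly (dd (3*j+1)) (-1) = -((-1)^j) \<and> poly (dd (3*j+2)) (-1) = -((-1)^j)"
proof (induction j)
  case 0 then show ?case by (simp add: AA_def numeral_2_eq_2)
next
  case (Suc j)
  have a: "poly AA (-1) = -1" by (simp add: AA_def)
  have e3: "3 * Suc j = Suc (Suc (3*j+1))" and e4: "3 * Suc j + 1 = Suc (Suc (3*j+2))"
    and e5: "3 * Suc j + 2 = Suc (Suc (3*Suc j))" by simp_all
  have p3: "poly (dd (3 * Suc j)) (-1) = 0"
    unfolding e3 dd_SS using Suc a by (simp add: numeral_2_eq_2 add.commute)
  have p4: "poly (dd (3 * Suc j + 1)) (-1) = -((-1)^Suc j)"
    unfolding e4 dd_SS using Suc a p3 by (simp add: numeral_2_eq_2 add.commute)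
  have p5: "poly (dd (3 * Suc j + 2)) (-1) = -((-1)^Suc j)"
    unfolding e5 dd_SS using Suc a p3 p4 by (simp add: numeral_2_eq_2)
  show ?case using p3 p4 p5 by simp
qed

lemma cop_lin:
  fixes p r :: "F3 poly"
  assumes "poly p c \<noteq> 0" "r dvd p"
  shows "coprime r [:-c,1:]"
proof -
  have pr: "prime_elem [:-c,1::F3:]" by (rule prime_elem_linear_field_poly) simp
  have "\<not> [:-c,1:] dvd r" using assms poly_eq_0_iff_dvd dvd_trans by blast
  then have "coprime [:-c,1:] r" using prime_elem_imp_coprime pr by blast
  then show ?thesis by (simp add: coprime_commute)
qed

lemma F3p_two: "(2::F3 poly) = -1"
proof -
  have "(2::F3 poly) + 1 = 0" using three0p by simp
  then show ?thesis by (simp add: eq_neg_iff_add_eq_0)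
qed

lemma of_nat_mod3: "(of_nat k :: F3 poly) = of_nat (k mod 3)"
proof -
  have "(of_nat k :: F3 poly) = of_nat (3 * (k div 3) + k mod 3)" by simp
  also have "\<dots> = 3 * of_nat (k div 3) + of_nat (k mod 3)" by (metis of_nat_add of_nat_mult of_nat_numeral)
  finally show ?thesis using three0p by simp
qed

lemma vv_p1: "vv + 1 = [:-(-1),1:]" by (simp add: vv_def one_pCons)
lemma vv_m1: "vv - 1 = [:-1,1:]" by (simp add: vv_def one_pCons diff_pCons)
lemma vv_0: "vv = [:-0,1:]" by (simp add: vv_def)

lemma main_F3:
  assumes k1: "1 \<le> k" and kr: "k mod 3 = 0 \<or> k mod 3 = 1"
  shows "coprime (dd k - dd (Suc (Suc k))) (pderiv (dd k - dd (Suc (Suc k))))"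
proof -
  define s where "s = dd k"
  define t where "t = dd (Suc k)"
  define E where "E = dd k - dd (Suc (Suc k))"
  define X where "X = vv*BB*pderiv E - vv*dB*E"
  have Eeq: "E = s - (- AA*t - vv*vv*s)" by (simp add: E_def s_def t_def)
  have Xeq: "X = - of_nat k*(cRs*s + cRt*t) + (of_nat k + 2)*(cRs*(- AA*t - vv*vv*s) + cRt*(- AA*(- AA*t - vv*vv*s) - vv*vv*t))"
  proof -
    have "X = vv*BB*pderiv (dd k) - vv*BB*pderiv (dd (Suc (Suc k))) - vv*dB*E"
      by (simp add: X_def E_def pderiv_diff algebra_simps del: dd.simps)
    also have "\<dots> = - of_nat k*(cRs*s + cRt*t) + of_nat (Suc (Suc k))*(cRs*dd (Suc (Suc k)) + cRt*dd (Suc (Suc (Suc k))))"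
      unfolding DL by (simp add: E_def s_def t_def algebra_simps del: dd.simps)
    also have "\<dots> = - of_nat k*(cRs*s + cRt*t) + (of_nat k + 2)*(cRs*(- AA*t - vv*vv*s) + cRt*(- AA*(- AA*t - vv*vv*s) - vv*vv*t))"
      by (simp add: s_def t_def algebra_simps)
    finally show ?thesis .
  qed
  define q where "q = (if k mod 3 = 0 then (vv+1)^3*(vv-1) else -((vv+1)*(vv-1)^3))"
  obtain al be where hs: "vv*q*s = be*E - AA*X" and ht: "vv*q*t = al*E + (1 + vv*vv)*X"
  proof (cases "k mod 3 = 0")
    case True
    then have M: "(of_nat k :: F3 poly) = 0" using of_nat_mod3[of k] by simp
    have qq: "q = (vv+1)^3*(vv-1)" using True q_def by simp
    show ?thesis
      apply (rule that)
      unfolding Eeq Xeq qq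
       apply (rule ds0_id[OF M])
      apply (rule dt0_id[OF M])
      done
  next
    case False
    then have K: "k mod 3 = 1" using kr by simp
    then have M: "(of_nat k :: F3 poly) = 1" using of_nat_mod3[of k] by simp
    have qq: "q = -((vv+1)*(vv-1)^3)" using False q_def by simp
    show ?thesis
      apply (rule that)
      unfolding Eeq Xeq qq
       apply (rule ds1_id[OF M])
      apply (rule dt1_id[OF M])
      done
  qed
  obtain k' where k': "k = Suc k'" using k1 by (cases k) auto
  have E0: "poly (pderiv E) 0 \<noteq> 0"
  proof -
    have "poly (pderiv E) 0 = poly (pderiv (dd (Suc k'))) 0 - poly (pderiv (dd (Suc (Suc (Suc k'))))) 0"
      by (simp add: E_def k' pderiv_diff del: dd.simps)
    also have "\<dots> = of_nat k' - of_nat (Suc (Suc k'))" using ev0[of k'] ev0[of "Suc (Suc k')"] by simp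
    also have "\<dots> = - 2" by simp
    also have "\<dots> = 1" using F3_two by simp
    finally show ?thesis by simp
  qed
  have E1: "poly E 1 \<noteq> 0" and Em1: "poly E (-1) \<noteq> 0"
  proof -
    define j where "j = k div 3"
    have kj: "k = 3*j \<or> k = 3*j+1" using kr unfolding j_def by presburger
    have nz: "((-1::F3)^j) \<noteq> 0" by simp
    from kj have "poly E 1 \<noteq> 0 \<and> poly E (-1) \<noteq> 0"
    proof
      assume kj: "k = 3*j"
      have "E = dd (3*j) - dd (3*j+2)" using kj by (simp add: E_def del: dd.simps)
      then have "poly E 1 = poly (dd (3*j)) 1 - poly (dd (3*j+2)) 1"
        and "poly E (-1) = poly (dd (3*j)) (-1) - poly (dd (3*j+2)) (-1)" by (simp_all del: dd.simps)
      then show ?thesis using ev1[of j] evm1[of j] nz by (simp del: dd.simps)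
    next
      assume kj: "k = 3*j+1"
      have idx: "Suc (Suc k) = 3*Suc j" using kj by simp
      have "E = dd (3*j+1) - dd (3*Suc j)" unfolding E_def idx unfolding kj ..
      then have "poly E 1 = poly (dd (3*j+1)) 1 - poly (dd (3*Suc j)) 1"
        and "poly E (-1) = poly (dd (3*j+1)) (-1) - poly (dd (3*Suc j)) (-1)" by (simp_all del: dd.simps)
      then show ?thesis using ev1[of j] evm1[of j] ev1[of "Suc j"] evm1[of "Suc j"] nz by (simp del: dd.simps)
    qed
    then show "poly E 1 \<noteq> 0" "poly E (-1) \<noteq> 0" by auto
  qed
  show ?thesis
    unfolding E_def[symmetric]
  proof (rule coprimeI)
    fix r assume rE: "r dvd E" and rE': "r dvd pderiv E"
    have rX: "r dvd X" unfolding X_def by (rule dvd_diff[OF dvd_mult[OF rE'] dvd_mult[OF rE]])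
    have r1: "r dvd vv*q*s" unfolding hs by (rule dvd_diff[OF dvd_mult[OF rE] dvd_mult[OF rX]])
    have r2: "r dvd vv*q*t" unfolding ht by (rule dvd_add[OF dvd_mult[OF rE] dvd_mult[OF rX]])
    have c0: "coprime r vv" unfolding vv_0 by (rule cop_lin[OF E0 rE'])
    have c1: "coprime r (vv+1)" unfolding vv_p1 by (rule cop_lin[OF Em1 rE])
    have c2: "coprime r (vv-1)" unfolding vv_m1 by (rule cop_lin[OF E1 rE])
    have cq1: "coprime r ((vv+1)^3*(vv-1))" using c1 c2 by simp
    have cq2: "coprime r (-((vv+1)*(vv-1)^3))" using c1 c2 by simp
    have cq: "coprime r q" unfolding q_def using cq1 cq2 by simp
    have cas: "t*t + AA*s*t + vv*vv*s*s = (vv*vv)^k" using cassini[of k] unfolding s_def t_def .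
    have "vv*q*(t*t + AA*s*t + vv*vv*s*s) = (vv*q*t)*t + (AA*t)*(vv*q*s) + (vv*vv*s)*(vv*q*s)"
      by (simp add: algebra_simps)
    then have "vv*q*(vv*vv)^k = (vv*q*t)*t + (AA*t)*(vv*q*s) + (vv*vv*s)*(vv*q*s)" unfolding cas .
    then have r3: "r dvd vv*q*(vv*vv)^k"
      using dvd_add[OF dvd_add[OF dvd_mult2[OF r2] dvd_mult[OF r1]] dvd_mult[OF r1]] by simp
    have "coprime r (vv*q*(vv*vv)^k)" using c0 cq by simp
    then show "is_unit r" by (rule coprime_common_divisor[OF _ dvd_refl r3])
  qed
qed

lemma smult2: "smult (2::F3) p = - p"
proof -
  have a: "smult (2::F3) p = smult (-1) p" by (subst F3_two) (rule refl)
  have b: "smult (-1::F3) p = - p" by simp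
  show ?thesis using a b by (rule trans)
qed

lemma red_ga: "reduce3 g_a = AA"
  by (simp add: reduce3_def g_a_def AA_def vv_def one_pCons)

lemma red_Q: "reduce3 (g_a^2 - g_B) = vv*vv"
proof -
  have "g_a^2 - g_B = [:0, -3, 1, 3:]" by (simp add: g_a_def g_B_def power2_eq_square)
  moreover have "(-3::F3) = 0" using three0 by simp
  ultimately show ?thesis by (simp add: reduce3_def vv_def three0)
qed

lemma red_D: "reduce3 (g_D m) = dd m \<and> reduce3 (g_D (Suc m)) = dd (Suc m)"
proof (induction m)
  case 0
  have "g_D 0 = 0" by (simp add: g_D_def)
  moreover have "g_D (Suc 0) = [:2:]" by (simp add: g_D_def atLeast0AtMost atMost_Suc)
  moreover have t2: "([:2:]::F3 poly) = -1"
  proof -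
    have a: "([:2:]::F3 poly) = [:-1:]" by (subst F3_two) (rule refl)
    have b: "([:-1:]::F3 poly) = -1" by (simp add: one_pCons)
    show ?thesis using a b by (rule trans)
  qed
  ultimately show ?case by (simp add: reduce3_def)
next
  case (Suc m)
  have "reduce3 (g_D (Suc (Suc m))) = smult 2 (reduce3 g_a) * reduce3 (g_D (Suc m)) - reduce3 (g_a^2 - g_B) * reduce3 (g_D m)"
    unfolding gD_rec reduce3_def by (simp add: hom_distribs)
  also have "\<dots> = dd (Suc (Suc m))" using Suc by (simp add: red_ga red_Q smult2)
  finally show ?case using Suc by simp
qed

theorem proposition5p7:
  fixes n :: int
  assumes "n \<le> -1" and "odd n" and "\<not> (3 dvd n)"
  shows "coprime (reduce3 (g_poly n)) (reduce3 (pderiv (g_poly n)))"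
proof -
  define k where "k = nat ((1 - n) div 2)"
  have hk: "g_poly n = g_D k - g_D (Suc (Suc k))" by (simp add: g_poly_def k_def Let_def)
  have ik: "int k = (1 - n) div 2" using assms(1) unfolding k_def by simp
  have k1: "1 \<le> k" using assms(1) ik by linarith
  have kr: "k mod 3 = 0 \<or> k mod 3 = 1" using assms(2,3) ik by presburger
  have r: "reduce3 (g_poly n) = dd k - dd (Suc (Suc k))"
    unfolding hk using red_D[of k] red_D[of "Suc k"] by (simp add: reduce3_def hom_distribs)
  have "reduce3 (pderiv (g_poly n)) = pderiv (reduce3 (g_poly n))"
    unfolding reduce3_def by (rule of_int_hom.map_poly_pderiv)
  then show ?thesis using main_F3[OF k1 kr] r by simp
qed


end
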